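(* Let $A$ be a linear Nakayama algebra with simple modules $S_0,\dots,S_{n-1}$, Kupisch series $[c_0,\dots,c_{n-1}]$ and Jacobson radical $J$, and let $d_j=\dim_K D(Ae_j)$. Let $0\le i\le n-1$ and $1\le k\le c_i$. Then the indecomposable module $e_iA/e_iJ^k$ has injective dimension at most one if and only if either $k=d_{i+k-1}$, or ($k<d_{i+k-1}$ and $d_{i+k-1}-k=d_{i-1}$) (with the convention $d_{-1}:=0$). Moreover, $k=d_{i+k-1}$ holds if and only if $e_iA/e_iJ^k$ is injective.
   Context: $K$ is a field; a linear Nakayama algebra with $n$ simple modules is a connected algebra $A=KQ/I$ with $Q$ the quiver $0\to1\to\cdots\to n-1$ and $I$ admissible; modules are finite-dimensional right modules. $e_i$ are the primitive idempotents and $S_i$ the simple modules; $e_iA$ is uniserial with composition factors $S_i,S_{i+1},\dots,S_{i+c_i-1}$ from top to socle, where $c_i=\dim_K e_iA$ ([$c_0,\dots,c_{n-1}$] is the Kupisch series). $D=\operatorname{Hom}_K(-,K)$, and $D(Ae_j)$ is the indecomposable injective module with socle $S_j$ (the injective envelope of $S_j$). *)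

theory Defs
  imports "Jordan_Normal_Form.Matrix"
begin

(* Finite-dimensional right modules over the linear Nakayama algebra A = KQ/I,
   Q = 0 -> 1 -> ... -> n-1, are encoded as quiver representations:
   a representation is a pair (dims, arr) where dims j = dim_K (M e_j) and
   arr j :: dims (Suc j) x dims j matrix is the action of the arrow j -> j+1.
   Vertices j >= n carry the zero space. *)

type_synonym 'k rep = "(nat \<Rightarrow> nat) \<times> (nat \<Rightarrow> 'k mat)"

definition rdim :: "'k rep \<Rightarrow> nat \<Rightarrow> nat" where
  "rdim V = fst V"

definition rarr :: "'k rep \<Rightarrow> nat \<Rightarrow> 'k mat" where
  "rarr V = snd V"

fun rpath :: "'k::semiring_1 rep \<Rightarrow> nat \<Rightarrow> nat \<Rightarrow> 'k mat" where
  "rpath V i 0 = 1\<^sub>m (rdim V i)"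
| "rpath V i (Suc l) = rarr V (i + l) * rpath V i l"

definition linear_kupisch :: "nat \<Rightarrow> (nat \<Rightarrow> nat) \<Rightarrow> bool" where
  "linear_kupisch n c \<longleftrightarrow> n \<ge> 1 \<and> c (n - 1) = 1 \<and>
     (\<forall>i. Suc i < n \<longrightarrow> c i \<ge> 2 \<and> c (Suc i) + 1 \<ge> c i) \<and>
     (\<forall>i<n. c i \<ge> 1 \<and> i + c i \<le> n)"

(* V is a (finite-dimensional) module over the algebra with Kupisch series c:
   the path of length c_i starting at i acts as zero (this generates I). *)
definition is_rep :: "nat \<Rightarrow> (nat \<Rightarrow> nat) \<Rightarrow> 'k::field rep \<Rightarrow> bool" where
  "is_rep n c V \<longleftrightarrow> (\<forall>j\<ge>n. rdim V j = 0) \<and>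
     (\<forall>j. rarr V j \<in> carrier_mat (rdim V (Suc j)) (rdim V j)) \<and>
     (\<forall>i<n. rpath V i (c i) = 0\<^sub>m (rdim V (i + c i)) (rdim V i))"

definition is_hom :: "'k::field rep \<Rightarrow> 'k rep \<Rightarrow> (nat \<Rightarrow> 'k mat) \<Rightarrow> bool" where
  "is_hom V W f \<longleftrightarrow> (\<forall>j. f j \<in> carrier_mat (rdim W j) (rdim V j) \<and>
      f (Suc j) * rarr V j = rarr W j * f j)"

definition is_mono :: "'k::field rep \<Rightarrow> 'k rep \<Rightarrow> (nat \<Rightarrow> 'k mat) \<Rightarrow> bool" where
  "is_mono V W f \<longleftrightarrow> (\<forall>j. \<forall>v\<in>carrier_vec (rdim V j).
      f j *\<^sub>v v = 0\<^sub>v (rdim W j) \<longrightarrow> v = 0\<^sub>v (rdim V j))"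

definition is_epi :: "'k::field rep \<Rightarrow> 'k rep \<Rightarrow> (nat \<Rightarrow> 'k mat) \<Rightarrow> bool" where
  "is_epi V W f \<longleftrightarrow> (\<forall>j. \<forall>w\<in>carrier_vec (rdim W j).
      \<exists>v\<in>carrier_vec (rdim V j). f j *\<^sub>v v = w)"

definition is_exact_at :: "'k::field rep \<Rightarrow> 'k rep \<Rightarrow> 'k rep \<Rightarrow>
    (nat \<Rightarrow> 'k mat) \<Rightarrow> (nat \<Rightarrow> 'k mat) \<Rightarrow> bool" where
  "is_exact_at U V W f g \<longleftrightarrow> (\<forall>j. \<forall>v\<in>carrier_vec (rdim V j).
      g j *\<^sub>v v = 0\<^sub>v (rdim W j) \<longleftrightarrow> (\<exists>u\<in>carrier_vec (rdim U j). f j *\<^sub>v u = v))"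

definition is_injective :: "nat \<Rightarrow> (nat \<Rightarrow> nat) \<Rightarrow> 'k::field rep \<Rightarrow> bool" where
  "is_injective n c I \<longleftrightarrow> is_rep n c I \<and>
     (\<forall>X Y u g. is_rep n c X \<longrightarrow> is_rep n c Y \<longrightarrow> is_hom X Y u \<longrightarrow> is_mono X Y u \<longrightarrow>
        is_hom X I g \<longrightarrow> (\<exists>h. is_hom Y I h \<and> (\<forall>j. h j * u j = g j)))"

definition injdim_le_one :: "nat \<Rightarrow> (nat \<Rightarrow> nat) \<Rightarrow> 'k::field rep \<Rightarrow> bool" where
  "injdim_le_one n c M \<longleftrightarrow> (\<exists>I0 I1 f g.
      is_injective n c I0 \<and> is_injective n c I1 \<and>
      is_hom M I0 f \<and> is_hom I0 I1 g \<and>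
      is_mono M I0 f \<and> is_exact_at M I0 I1 f g \<and> is_epi I0 I1 g)"

(* the module e_i A / e_i J^k : uniserial with composition factors
   S_i, ..., S_{i+k-1}, i.e. K at vertices i..i+k-1 joined by identities *)
definition uniserial_mod :: "nat \<Rightarrow> nat \<Rightarrow> 'k::field rep" where
  "uniserial_mod i k =
     (let d = (\<lambda>j. if i \<le> j \<and> j < i + k then 1 else 0)
      in (d, (\<lambda>j. if i \<le> j \<and> Suc j < i + k then 1\<^sub>m 1 else 0\<^sub>m (d (Suc j)) (d j))))"

(* d_j = dim_K D(A e_j) = dim_K A e_j = sum_m dim_K e_m A e_j,
   and e_m A e_j is K (nonzero path m -> j) iff m <= j < m + c_m, else 0 *)
definition dinj :: "(nat \<Rightarrow> nat) \<Rightarrow> nat \<Rightarrow> nat" where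
  "dinj c j = card {m. m \<le> j \<and> j < m + c m}"

definition dinj_pred :: "(nat \<Rightarrow> nat) \<Rightarrow> nat \<Rightarrow> nat" where
  "dinj_pred c i = (if i = 0 then 0 else dinj c (i - 1))"

end

theory Submission
  imports Defs "Jordan_Normal_Form.Matrix_Kernel"
begin
lemma left_inverse_exists:
  fixes A :: "'k::field mat"
  assumes A: "A \<in> carrier_mat nr nc"
    and inj: "\<And>v. v \<in> carrier_vec nc \<Longrightarrow> A *\<^sub>v v = 0\<^sub>v nr \<Longrightarrow> v = 0\<^sub>v nc"
  shows "\<exists>L \<in> carrier_mat nc nr. L * A = 1\<^sub>m nc"
proof -
  obtain C where gj: "gauss_jordan_single A = C" by auto
  note g = gauss_jordan_single[OF A gj]
  obtain P Q where CPA: "C = P * A" and P: "P \<in> carrier_mat nr nr" using g(4) by auto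
  have C: "C \<in> carrier_mat nr nc" by (rule g(2))
  have ref: "row_echelon_form C" by (rule g(3))
  have Cinj: "\<And>v. v \<in> carrier_vec nc \<Longrightarrow> C *\<^sub>v v = 0\<^sub>v nr \<Longrightarrow> v = 0\<^sub>v nc"
    using g(1) inj by blast
  from ref C obtain f where pf: "pivot_fun C f nc" unfolding row_echelon_form_def by auto
  have dC: "dim_row C = nr" using C by auto
  note pv = pivot_funD[OF dC pf]
  note pp = pivot_positions[OF C pf]
  have allpiv: "snd ` set (pivot_positions C) = {0 ..< nc}"
  proof (rule ccontr)
    assume "snd ` set (pivot_positions C) \<noteq> {0 ..< nc}"
    from find_base_vector[OF ref C this] Cinj show False by blast
  qed
  have ex: "\<exists>i<nr. f i = j" if "j < nc" for j
  proof -
    from that allpiv have "j \<in> snd ` set (pivot_positions C)" by auto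
    then show ?thesis unfolding pp(1) by auto
  qed
  have uniq: "i1 = i2" if "i1 < nr" "i2 < nr" "f i1 = f i2" "f i1 < nc" for i1 i2
  proof (rule ccontr)
    assume "i1 \<noteq> i2"
    from pv(5)[OF that(1) that(4) that(2)] this pv(4)[OF that(2)] that show False by auto
  qed
  define L' where "L' = mat nc nr (\<lambda>(j,i). if f i = j then (1::'k) else 0)"
  have L': "L' \<in> carrier_mat nc nr" unfolding L'_def by auto
  have "L' * C = 1\<^sub>m nc"
  proof (rule eq_matI)
    fix j j' assume j: "j < dim_row (1\<^sub>m nc)" and j': "j' < dim_col (1\<^sub>m nc)"
    hence j: "j < nc" and j': "j' < nc" by auto
    from ex[OF j] obtain i0 where i0: "i0 < nr" "f i0 = j" by auto
    have "(L' * C) $$ (j, j') = (\<Sum>i<nr. L' $$ (j,i) * C $$ (i, j'))"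
      using L' C j j' by (auto simp: scalar_prod_def atLeast0LessThan)
    also have "\<dots> = (\<Sum>i<nr. if i = i0 then C $$ (i0, j') else 0)"
      apply (rule sum.cong[OF refl])
      using uniq i0 j unfolding L'_def by auto
    also have "\<dots> = C $$ (i0, j')" using i0 by simp
    also have "\<dots> = 1\<^sub>m nc $$ (j, j')"
    proof (cases "j' = j")
      case True thus ?thesis using pv(4)[OF i0(1)] i0 j by auto
    next
      case False
      from ex[OF j'] obtain i1 where i1: "i1 < nr" "f i1 = j'" by auto
      with False i0 have "i1 \<noteq> i0" by auto
      from pv(5)[OF i1(1) _ i0(1) this[symmetric]] i1 j' False j show ?thesis by auto
    qed
    finally show "(L' * C) $$ (j, j') = 1\<^sub>m nc $$ (j, j')" .
  qed (use L' C in auto)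
  hence "(L' * P) * A = 1\<^sub>m nc" using CPA L' P A by (simp add: assoc_mult_mat[of L' nc nr P nr A nc])
  thus ?thesis using L' P by (intro bexI[of _ "L' * P"]) auto
qed

lemma zero_rows_eq: "A \<in> carrier_mat 0 c \<Longrightarrow> B \<in> carrier_mat 0 c \<Longrightarrow> A = B"
  by (rule eq_matI) auto
lemma zero_cols_eq: "A \<in> carrier_mat r 0 \<Longrightarrow> B \<in> carrier_mat r 0 \<Longrightarrow> A = B"
  by (rule eq_matI) auto

lemma mat_eq_by_vec:
  fixes A B :: "'k::field mat"
  assumes A: "A \<in> carrier_mat r c" and B: "B \<in> carrier_mat r c"
    and e: "\<And>v. v \<in> carrier_vec c \<Longrightarrow> A *\<^sub>v v = B *\<^sub>v v"
  shows "A = B"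
proof (rule eq_matI)
  fix i j assume i: "i < dim_row B" and j: "j < dim_col B"
  have "(A *\<^sub>v unit_vec c j) $ i = (B *\<^sub>v unit_vec c j) $ i" using e[of "unit_vec c j"] by simp
  thus "A $$ (i, j) = B $$ (i, j)" using A B i j by simp
qed (use A B in auto)

lemma right_cancel:
  fixes A B g :: "'k::field mat"
  assumes A: "A \<in> carrier_mat p r" and B: "B \<in> carrier_mat p r" and g: "g \<in> carrier_mat r c"
    and surj: "\<And>w. w \<in> carrier_vec r \<Longrightarrow> \<exists>v\<in>carrier_vec c. g *\<^sub>v v = w"
    and eq: "A * g = B * g"
  shows "A = B"
proof (rule mat_eq_by_vec[OF A B])
  fix w :: "'k vec" assume w: "w \<in> carrier_vec r"
  from surj[OF w] obtain v where v: "v \<in> carrier_vec c" "g *\<^sub>v v = w" by auto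
  have "A *\<^sub>v w = (A * g) *\<^sub>v v" using A g v by auto
  also have "\<dots> = (B * g) *\<^sub>v v" by (simp add: eq)
  also have "\<dots> = B *\<^sub>v w" using B g v by auto
  finally show "A *\<^sub>v w = B *\<^sub>v w" .
qed

definition ones :: "nat \<Rightarrow> nat \<Rightarrow> 'k::field mat" where
  "ones r c = mat r c (\<lambda>_. 1)"

definition idim :: "nat \<Rightarrow> nat \<Rightarrow> nat \<Rightarrow> nat" where
  "idim b l m = (if b \<le> m \<and> m < b + l then 1 else 0)"

lemma ones_carrier[simp]: "ones r c \<in> carrier_mat r c" unfolding ones_def by auto
lemma ones_dims[simp]: "dim_row (ones r c) = r" "dim_col (ones r c) = c" unfolding ones_def by auto
lemma ones_zero: "r = 0 \<or> c = 0 \<Longrightarrow> ones r c = (0\<^sub>m r c :: 'k::field mat)"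
  by (rule eq_matI) (auto simp: ones_def)
lemma ones_11: "ones 1 1 = (1\<^sub>m 1 :: 'k::field mat)"
  by (rule eq_matI) (auto simp: ones_def)
lemma ones_ne_zero: "ones 1 1 \<noteq> (0\<^sub>m 1 1 :: 'k::field mat)"
proof
  assume "ones 1 1 = (0\<^sub>m 1 1 :: 'k mat)"
  hence "ones 1 1 $$ (0,0) = (0\<^sub>m 1 1 :: 'k mat) $$ (0,0)" by simp
  thus False by (simp add: ones_def)
qed

lemma ones_11': "ones (Suc 0) (Suc 0) = (1\<^sub>m (Suc 0) :: 'k::field mat)"
  using ones_11 by simp

lemma ones_mult:
  assumes "s \<le> 1"
  shows "ones r s * ones s t = (if s = 0 then 0\<^sub>m r t else (ones r t :: 'k::field mat))"
proof (cases "s = 0")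
  case True thus ?thesis by (intro eq_matI) (auto simp: ones_def scalar_prod_def)
next
  case False hence s: "s = 1" using assms by auto
  show ?thesis unfolding s by (intro eq_matI) (auto simp: ones_def scalar_prod_def)
qed

lemma idim_le1[simp]: "idim b l m \<le> 1" unfolding idim_def by auto

lemma rdim_U: "rdim (uniserial_mod b l :: 'k::field rep) = idim b l"
  unfolding uniserial_mod_def rdim_def idim_def Let_def by (auto simp: fun_eq_iff)

lemma rarr_U: "rarr (uniserial_mod b l :: 'k::field rep) m = ones (idim b l (Suc m)) (idim b l m)"
proof (cases "b \<le> m \<and> Suc m < b + l")
  case True thus ?thesis unfolding uniserial_mod_def rarr_def idim_def Let_def
    by (simp add: ones_11')
next
  case False
  hence "idim b l (Suc m) = 0 \<or> idim b l m = 0" unfolding idim_def by auto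
  with False show ?thesis unfolding uniserial_mod_def rarr_def Let_def
    by (subst ones_zero) (auto simp: idim_def)
qed

lemma rpath_U: "rpath (uniserial_mod b l :: 'k::field rep) m p = ones (idim b l (m + p)) (idim b l m)"
proof (induction p)
  case 0 thus ?case by (simp add: rdim_U) (auto simp: idim_def ones_11' intro: eq_matI)
next
  case (Suc p)
  have "rpath (uniserial_mod b l :: 'k rep) m (Suc p) =
     ones (idim b l (Suc (m + p))) (idim b l (m + p)) * ones (idim b l (m + p)) (idim b l m)"
    by (simp add: Suc rarr_U)
  also have "\<dots> = ones (idim b l (m + Suc p)) (idim b l m)"
    by (subst ones_mult) (auto intro!: ones_zero[symmetric] simp: idim_def)
  finally show ?case .
qed

definition carr :: "'k::field rep \<Rightarrow> bool" where
  "carr V \<longleftrightarrow> (\<forall>j. rarr V j \<in> carrier_mat (rdim V (Suc j)) (rdim V j))"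

lemma rep_carr: "is_rep n c V \<Longrightarrow> carr V" unfolding is_rep_def carr_def by auto
lemma U_carr: "carr (uniserial_mod b l :: 'k::field rep)"
  unfolding carr_def rarr_U rdim_U by auto

lemma rpath_carrier: "carr V \<Longrightarrow> rpath V m p \<in> carrier_mat (rdim V (m + p)) (rdim V m)"
proof (induction p)
  case (Suc p)
  have "rarr V (m + p) \<in> carrier_mat (rdim V (Suc (m + p))) (rdim V (m + p))" using Suc.prems by (simp add: carr_def)
  from mult_carrier_mat[OF this Suc.IH[OF Suc.prems]] show ?case by simp
qed auto

lemma rpath_Suc2: assumes "carr V"
  shows "rpath V m (Suc p) = rpath V (Suc m) p * rarr V m"
proof (induction p)
  case 0
  have "rarr V m \<in> carrier_mat (rdim V (Suc m)) (rdim V m)" using assms by (simp add: carr_def)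
  thus ?case by simp
next
  case (Suc p)
  have "rpath V m (Suc (Suc p)) = rarr V (m + Suc p) * (rpath V (Suc m) p * rarr V m)"
    using Suc by simp
  also have "\<dots> = (rarr V (m + Suc p) * rpath V (Suc m) p) * rarr V m"
    using assms rpath_carrier[OF assms, of "Suc m" p]
    by (intro assoc_mult_mat[symmetric, of _ "rdim V (Suc (m + Suc p))" "rdim V (m + Suc p)" _ "rdim V (Suc m)" _ "rdim V m"])
       (auto simp: carr_def)
  finally show ?case by simp
qed

lemma rpath_add: assumes "carr V"
  shows "rpath V m (p + q) = rpath V (m + p) q * rpath V m p"
proof (induction q)
  case 0 thus ?case using rpath_carrier[OF assms, of m p] by simp
next
  case (Suc q)
  have "rpath V m (p + Suc q) = rarr V (m + p + q) * (rpath V (m + p) q * rpath V m p)"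
    using Suc by (simp add: add.assoc)
  also have "\<dots> = (rarr V (m + p + q) * rpath V (m + p) q) * rpath V m p"
    using assms rpath_carrier[OF assms, of "m+p" q] rpath_carrier[OF assms, of m p]
    by (intro assoc_mult_mat[symmetric, of _ "rdim V (Suc (m + p + q))" "rdim V (m + p + q)" _ "rdim V (m+p)" _ "rdim V m"])
       (auto simp: carr_def)
  finally show ?case by simp
qed

lemma hom_path:
  assumes V: "carr V" and W: "carr W" and f: "is_hom V W f"
  shows "f (m + p) * rpath V m p = rpath W m p * f m"
proof (induction p)
  case 0
  have "f m \<in> carrier_mat (rdim W m) (rdim V m)" using f unfolding is_hom_def by auto
  thus ?case by simp
next
  case (Suc p)
  have fc: "\<And>j. f j \<in> carrier_mat (rdim W j) (rdim V j)"
   and fa: "\<And>j. f (Suc j) * rarr V j = rarr W j * f j" using f unfolding is_hom_def by auto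
  have cV: "\<And>j. rarr V j \<in> carrier_mat (rdim V (Suc j)) (rdim V j)" using V unfolding carr_def by auto
  have cW: "\<And>j. rarr W j \<in> carrier_mat (rdim W (Suc j)) (rdim W j)" using W unfolding carr_def by auto
  note pV = rpath_carrier[OF V] and pW = rpath_carrier[OF W]
  have "f (m + Suc p) * rpath V m (Suc p) = (f (Suc (m + p)) * rarr V (m + p)) * rpath V m p"
    using fc cV pV by (simp add: assoc_mult_mat[symmetric, of _ "rdim W (Suc (m+p))" "rdim V (Suc (m+p))" _ "rdim V (m+p)" _ "rdim V m"])
  also have "\<dots> = rarr W (m + p) * (f (m + p) * rpath V m p)"
    using fc cW pV by (simp add: fa assoc_mult_mat[of _ "rdim W (Suc (m+p))" "rdim W (m+p)" _ "rdim V (m+p)" _ "rdim V m"])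
  also have "\<dots> = (rarr W (m + p) * rpath W m p) * f m"
    using fc cW pW by (simp add: Suc assoc_mult_mat[symmetric, of _ "rdim W (Suc (m+p))" "rdim W (m+p)" _ "rdim W m" _ "rdim V m"])
  finally show ?case by simp
qed

lemma rep_path_zero:
  assumes V: "is_rep n c V" and m: "m < n" and p: "c m \<le> p"
  shows "rpath V m p = 0\<^sub>m (rdim V (m + p)) (rdim V m)"
proof -
  have cV: "carr V" by (rule rep_carr[OF V])
  have z: "rpath V m (c m) = 0\<^sub>m (rdim V (m + c m)) (rdim V m)" using V m unfolding is_rep_def by auto
  have "rpath V m (c m + (p - c m)) = rpath V (m + c m) (p - c m) * rpath V m (c m)"
    by (rule rpath_add[OF cV])
  also have "\<dots> = 0\<^sub>m (rdim V (m + c m + (p - c m))) (rdim V m)"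
    unfolding z using rpath_carrier[OF cV, of "m + c m" "p - c m"] by simp
  finally show ?thesis using p by simp
qed

lemma hom_comp:
  assumes "is_hom U V f" "is_hom V W g" "carr U" "carr V" "carr W"
  shows "is_hom U W (\<lambda>m. g m * f m)"
  unfolding is_hom_def
proof (intro allI conjI)
  fix j
  have fc: "\<And>j. f j \<in> carrier_mat (rdim V j) (rdim U j)"
   and fa: "\<And>j. f (Suc j) * rarr U j = rarr V j * f j"
   and gc: "\<And>j. g j \<in> carrier_mat (rdim W j) (rdim V j)"
   and ga: "\<And>j. g (Suc j) * rarr V j = rarr W j * g j" using assms unfolding is_hom_def by auto
  have cU: "\<And>j. rarr U j \<in> carrier_mat (rdim U (Suc j)) (rdim U j)"
   and cV: "\<And>j. rarr V j \<in> carrier_mat (rdim V (Suc j)) (rdim V j)"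
   and cW: "\<And>j. rarr W j \<in> carrier_mat (rdim W (Suc j)) (rdim W j)" using assms unfolding carr_def by auto
  show "g j * f j \<in> carrier_mat (rdim W j) (rdim U j)" by (rule mult_carrier_mat[OF gc fc])
  have "g (Suc j) * f (Suc j) * rarr U j = g (Suc j) * (f (Suc j) * rarr U j)"
    by (rule assoc_mult_mat[OF gc fc cU])
  also have "\<dots> = (g (Suc j) * rarr V j) * f j" 
    unfolding fa by (rule assoc_mult_mat[symmetric, OF gc cV fc])
  also have "\<dots> = rarr W j * (g j * f j)"
    unfolding ga by (rule assoc_mult_mat[OF cW gc fc])
  finally show "g (Suc j) * f (Suc j) * rarr U j = rarr W j * (g j * f j)" .
qed

lemma mc_mono:
  assumes K: "linear_kupisch n c" and "b \<le> m" "m < n"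
  shows "b + c b \<le> m + c m"
using assms(2,3)
proof (induction m)
  case 0 thus ?case by simp
next
  case (Suc m)
  show ?case
  proof (cases "b = Suc m")
    case True thus ?thesis by simp
  next
    case False
    hence "b \<le> m" using Suc by simp
    with Suc have "b + c b \<le> m + c m" by simp
    moreover have "c m \<le> c (Suc m) + 1" using K Suc.prems unfolding linear_kupisch_def by auto
    ultimately show ?thesis by simp
  qed
qed

lemma dinj_char:
  assumes K: "linear_kupisch n c" and j: "j < n"
  shows "1 \<le> dinj c j" "dinj c j \<le> j + 1" "\<And>m. m \<le> j \<Longrightarrow> (j < m + c m \<longleftrightarrow> j + 1 - dinj c j \<le> m)"
proof -
  let ?S = "{m. m \<le> j \<and> j < m + c m}"
  have jS: "j \<in> ?S" using K j unfolding linear_kupisch_def by auto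
  define a where "a = (LEAST m. m \<in> ?S)"
  have aS: "a \<in> ?S" unfolding a_def by (rule LeastI[of "\<lambda>m. m \<in> ?S", OF jS])
  have S: "?S = {a..j}"
  proof
    show "?S \<subseteq> {a..j}"
    proof
      fix m assume m: "m \<in> ?S"
      have "a \<le> m" unfolding a_def by (rule Least_le[of "\<lambda>m. m \<in> ?S", OF m])
      with m show "m \<in> {a..j}" by auto
    qed
    show "{a..j} \<subseteq> ?S"
    proof
      fix m assume m: "m \<in> {a..j}"
      have "a + c a \<le> m + c m" using mc_mono[OF K, of a m] m j by auto
      with aS m show "m \<in> ?S" by auto
    qed
  qed
  have d: "dinj c j = j + 1 - a" unfolding dinj_def S using aS by auto
  show "1 \<le> dinj c j" "dinj c j \<le> j + 1" using d aS by auto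
  fix m assume m: "m \<le> j"
  have "j < m + c m \<longleftrightarrow> m \<in> ?S" using m by auto
  also have "\<dots> \<longleftrightarrow> a \<le> m" using m S by auto
  finally show "j < m + c m \<longleftrightarrow> j + 1 - dinj c j \<le> m" using d aS by auto
qed

lemma U_rep:
  assumes K: "linear_kupisch n c" and bl: "b + l \<le> n" and b: "b < n" and lc: "l \<le> c b"
  shows "is_rep n c (uniserial_mod b l :: 'k::field rep)"
  unfolding is_rep_def
proof (intro conjI allI impI)
  fix j assume "n \<le> j" thus "rdim (uniserial_mod b l :: 'k rep) j = 0" using bl by (simp add: rdim_U idim_def)
next
  fix j show "rarr (uniserial_mod b l :: 'k rep) j \<in> carrier_mat (rdim (uniserial_mod b l :: 'k rep) (Suc j)) (rdim (uniserial_mod b l :: 'k rep) j)"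
    by (simp add: rarr_U rdim_U)
next
  fix m assume m: "m < n"
  have "idim b l (m + c m) = 0 \<or> idim b l m = 0"
  proof (cases "b \<le> m \<and> m < b + l")
    case True
    with mc_mono[OF K, of b m] m lc have "b + l \<le> m + c m" by auto
    thus ?thesis by (simp add: idim_def)
  qed (auto simp: idim_def)
  thus "rpath (uniserial_mod b l :: 'k rep) m (c m) = 0\<^sub>m (rdim (uniserial_mod b l :: 'k rep) (m + c m)) (rdim (uniserial_mod b l :: 'k rep) m)"
    by (simp add: rpath_U rdim_U ones_zero)
qed

lemma E_inj:
  assumes K: "linear_kupisch n c" and j: "j < n"
  shows "is_injective n c (uniserial_mod (j + 1 - dinj c j) (dinj c j) :: 'k::field rep)"
proof -
  define d where "d = dinj c j"
  define a where "a = j + 1 - d"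
  note dc = dinj_char[OF K j, folded d_def, folded a_def]
  have ad: "a + d = j + 1" using dc unfolding a_def by auto
  have aj: "a \<le> j" using dc unfolding a_def by auto
  have ac: "d \<le> c a" using dc(3)[OF aj] ad by auto
  let ?E = "uniserial_mod a d :: 'k rep"
  have idE: "\<And>m. idim a d m = (if a \<le> m \<and> m \<le> j then 1 else 0)" unfolding idim_def using ad by auto
  have rep: "is_rep n c ?E" by (rule U_rep[OF K]) (use ad j aj ac in auto)
  have "is_injective n c ?E" unfolding is_injective_def
  proof (intro conjI allI impI rep)
    fix X Y :: "'k rep" and u g
    assume X: "is_rep n c X" and Y: "is_rep n c Y" and hu: "is_hom X Y u" and mu: "is_mono X Y u"
      and hg: "is_hom X ?E g"
    have cX: "carr X" and cY: "carr Y" using X Y by (auto intro: rep_carr)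
    have uc: "\<And>m. u m \<in> carrier_mat (rdim Y m) (rdim X m)" using hu unfolding is_hom_def by auto
    have gc: "\<And>m. g m \<in> carrier_mat (idim a d m) (rdim X m)" using hg unfolding is_hom_def by (auto simp: rdim_U)
    have cYa: "\<And>m. rarr Y m \<in> carrier_mat (rdim Y (Suc m)) (rdim Y m)" using cY unfolding carr_def by auto
    obtain L where L: "L \<in> carrier_mat (rdim X j) (rdim Y j)" and Lu: "L * u j = 1\<^sub>m (rdim X j)"
      using left_inverse_exists[OF uc[of j]] mu unfolding is_mono_def by blast
    have gj: "g j \<in> carrier_mat 1 (rdim X j)" using gc[of j] aj by (simp add: idE)
    define phi where "phi = g j * L"
    have phi: "phi \<in> carrier_mat 1 (rdim Y j)" unfolding phi_def using gj L by auto
    define h where "h m = (if a \<le> m \<and> m \<le> j then phi * rpath Y m (j - m) else 0\<^sub>m 0 (rdim Y m))" for m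
    have hc: "h m \<in> carrier_mat (idim a d m) (rdim Y m)" for m
    proof (cases "a \<le> m \<and> m \<le> j")
      case True
      have "rpath Y m (j - m) \<in> carrier_mat (rdim Y j) (rdim Y m)" using rpath_carrier[OF cY, of m "j - m"] True by simp
      thus ?thesis using True phi unfolding h_def idE by auto
    qed (auto simp: h_def idE)
    have "is_hom Y ?E h" unfolding is_hom_def
    proof (intro allI conjI)
      fix m
      show "h m \<in> carrier_mat (rdim ?E m) (rdim Y m)" using hc by (simp add: rdim_U)
      have lhs: "h (Suc m) * rarr Y m \<in> carrier_mat (idim a d (Suc m)) (rdim Y m)"
        using hc[of "Suc m"] cYa[of m] by auto
      have rhs: "rarr ?E m * h m \<in> carrier_mat (idim a d (Suc m)) (rdim Y m)"
        using hc[of m] by (auto simp: rarr_U)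
      show "h (Suc m) * rarr Y m = rarr ?E m * h m"
      proof (cases "a \<le> m \<and> Suc m \<le> j")
        case True
        have p: "rpath Y (Suc m) (j - Suc m) \<in> carrier_mat (rdim Y j) (rdim Y (Suc m))"
          using rpath_carrier[OF cY, of "Suc m" "j - Suc m"] True by simp
        have "h (Suc m) * rarr Y m = phi * (rpath Y (Suc m) (j - Suc m) * rarr Y m)"
          using True p phi cYa[of m] unfolding h_def by (simp add: assoc_mult_mat[OF phi p])
        also have "rpath Y (Suc m) (j - Suc m) * rarr Y m = rpath Y m (j - m)"
          proof -
            have e: "j - m = Suc (j - Suc m)" using True aj by auto
            show ?thesis using rpath_Suc2[OF cY, of m "j - Suc m"] by (simp only: e)
          qed
        also have "phi * rpath Y m (j - m) = h m" using True unfolding h_def by simp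
        also have "h m = rarr ?E m * h m" using True hc[of m]
          by (simp add: rarr_U idE ones_11')
        finally show ?thesis .
      next
        case F: False
        show ?thesis
        proof (cases "Suc m = a")
          case True
          have a1: "a - 1 < n" "m = a - 1" using True aj j by auto
          have "c (a - 1) \<le> j - m"
          proof -
            have "\<not> (j < (a - 1) + c (a - 1))" using dc(3)[of "a - 1"] True aj by auto
            thus ?thesis using True by auto
          qed
          hence z: "rpath Y m (j - m) = 0\<^sub>m (rdim Y j) (rdim Y m)"
            using rep_path_zero[OF Y a1(1), of "j - m"] a1 aj by auto
          have p: "rpath Y (Suc m) (j - Suc m) \<in> carrier_mat (rdim Y j) (rdim Y (Suc m))"
            using rpath_carrier[OF cY, of "Suc m" "j - Suc m"] True aj by simp
          have "h (Suc m) * rarr Y m = phi * (rpath Y (Suc m) (j - Suc m) * rarr Y m)"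
            using True aj p phi cYa[of m] unfolding h_def by (simp add: assoc_mult_mat[OF phi p])
          also have "rpath Y (Suc m) (j - Suc m) * rarr Y m = rpath Y m (j - m)"
            proof -
            have e: "j - m = Suc (j - Suc m)" using True aj by auto
            show ?thesis using rpath_Suc2[OF cY, of m "j - Suc m"] by (simp only: e)
          qed
          also have "phi * \<dots> = 0\<^sub>m 1 (rdim Y m)" unfolding z using phi by simp
          also have "\<dots> = rarr ?E m * h m" 
            using True aj by (simp add: rarr_U idE h_def)
          finally show ?thesis .
        next
          case False
          with F have z: "idim a d (Suc m) = 0" by (auto simp: idE)
          show ?thesis using zero_rows_eq[OF lhs[unfolded z] rhs[unfolded z]] .
        qed
      qed
    qed
    moreover have "h m * u m = g m" for m
    proof (cases "a \<le> m \<and> m \<le> j")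
      case True
      have p: "rpath Y m (j - m) \<in> carrier_mat (rdim Y j) (rdim Y m)"
        using rpath_carrier[OF cY, of m "j - m"] True by simp
      have pX: "rpath X m (j - m) \<in> carrier_mat (rdim X j) (rdim X m)"
        using rpath_carrier[OF cX, of m "j - m"] True by simp
      have hp: "u j * rpath X m (j - m) = rpath Y m (j - m) * u m"
        using hom_path[OF cX cY hu, of m "j - m"] True by simp
      have gp: "g j * rpath X m (j - m) = rpath ?E m (j - m) * g m"
        using hom_path[OF cX U_carr hg, of m "j - m"] True by simp
      have "h m * u m = phi * (rpath Y m (j - m) * u m)"
        using True unfolding h_def by (simp add: assoc_mult_mat[OF phi p uc])
      also have "\<dots> = g j * ((L * u j) * rpath X m (j - m))" 
        unfolding hp[symmetric] phi_def
        using gj L uc[of j] pX by (simp add: assoc_mult_mat[of _ 1 "rdim X j" _ "rdim Y j" _ "rdim X m"]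
           assoc_mult_mat[of _ "rdim X j" "rdim Y j" _ "rdim X j" _ "rdim X m"])
      also have "\<dots> = rpath ?E m (j - m) * g m" unfolding Lu gp[symmetric] using pX by simp
      also have "\<dots> = g m" using True gc[of m] by (simp add: rpath_U idE ones_11')
      finally show ?thesis .
    next
      case False
      hence "idim a d m = 0" by (simp add: idE)
      have "h m * u m \<in> carrier_mat (idim a d m) (rdim X m)" using hc[of m] uc[of m] by (rule mult_carrier_mat)
      from zero_rows_eq[OF this[unfolded \<open>idim a d m = 0\<close>] gc[of m, unfolded \<open>idim a d m = 0\<close>]]
      show ?thesis .
    qed
    ultimately show "\<exists>h. is_hom Y ?E h \<and> (\<forall>j. h j * u j = g j)" by blast
  qed
  thus ?thesis unfolding a_def d_def .
qed

lemma zero_mid: "A \<in> carrier_mat r 0 \<Longrightarrow> B \<in> carrier_mat 0 c \<Longrightarrow> A * B = (0\<^sub>m r c :: 'k::field mat)"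
  by (rule eq_matI) (auto simp: scalar_prod_def)

lemma ones_sq_eq:
  assumes "q \<le> 1" "q' \<le> 1" "p = 0 \<or> r = 0 \<or> q = q'"
  shows "ones p q * ones q r = (ones p q' * ones q' r :: 'k::field mat)"
  using assms by (auto simp: ones_mult intro: ones_zero[symmetric] ones_zero)

lemma vec0_eq: "v \<in> carrier_vec 0 \<Longrightarrow> v = 0\<^sub>v 0"
  by (rule eq_vecI) auto

lemma id_hom: assumes "carr V" shows "is_hom V V (\<lambda>m. 1\<^sub>m (rdim V m))"
  unfolding is_hom_def
proof (intro allI conjI)
  fix j
  have "rarr V j \<in> carrier_mat (rdim V (Suc j)) (rdim V j)" using assms by (simp add: carr_def)
  thus "1\<^sub>m (rdim V (Suc j)) * rarr V j = rarr V j * 1\<^sub>m (rdim V j)" by simp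
qed auto

lemma U_not_inj:
  assumes K: "linear_kupisch n c" and bl: "b + l \<le> n" and l1: "1 \<le> l" and lc: "l \<le> c b"
    and ld: "l < dinj c (b + l - 1)"
  shows "\<not> is_injective n c (uniserial_mod b l :: 'k::field rep)"
proof
  assume inj: "is_injective n c (uniserial_mod b l :: 'k rep)"
  define j where "j = b + l - 1"
  have j: "j < n" using bl l1 unfolding j_def by auto
  define d where "d = dinj c j"
  define a where "a = j + 1 - d"
  note dc = dinj_char[OF K j, folded d_def, folded a_def]
  have ad: "a + d = j + 1" using dc unfolding a_def by auto
  have aj: "a \<le> j" using dc unfolding a_def by auto
  have ac: "d \<le> c a" using dc(3)[OF aj] ad by auto
  have ab: "a < b" using ld ad l1 unfolding j_def d_def by auto
  let ?M = "uniserial_mod b l :: 'k rep"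
  let ?E = "uniserial_mod a d :: 'k rep"
  have repM: "is_rep n c ?M" by (rule U_rep[OF K bl _ lc]) (use bl l1 in auto)
  have repE: "is_rep n c ?E" by (rule U_rep[OF K]) (use ad j aj ac in auto)
  define u where "u m = (ones (idim a d m) (idim b l m) :: 'k mat)" for m
  have hu: "is_hom ?M ?E u" unfolding is_hom_def u_def rdim_U rarr_U
    by (auto intro!: ones_sq_eq) (use ab in \<open>auto simp: idim_def j_def ad[unfolded j_def] split: if_splits\<close>)
  have mu: "is_mono ?M ?E u" unfolding is_mono_def rdim_U u_def
  proof (intro allI ballI impI)
    fix m and v :: "'k vec" assume v: "v \<in> carrier_vec (idim b l m)"
      and z: "ones (idim a d m) (idim b l m) *\<^sub>v v = 0\<^sub>v (idim a d m)"
    show "v = 0\<^sub>v (idim b l m)"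
    proof (cases "b \<le> m \<and> m < b + l")
      case True
      hence "idim a d m = 1" "idim b l m = 1" using ab ad l1 unfolding idim_def j_def by auto
      thus ?thesis using z v by (simp add: ones_11')
    next
      case False
      hence "idim b l m = 0" unfolding idim_def by auto
      thus ?thesis using v vec0_eq by auto
    qed
  qed
  have hg: "is_hom ?M ?M (\<lambda>m. 1\<^sub>m (rdim ?M m))" by (rule id_hom[OF U_carr])
  from inj[unfolded is_injective_def] repM repE hu mu hg
  obtain h where hh: "is_hom ?E ?M h" and hu: "\<And>m. h m * u m = 1\<^sub>m (rdim ?M m)" by blast
  have hc: "\<And>m. h m \<in> carrier_mat (idim b l m) (idim a d m)" using hh unfolding is_hom_def rdim_U by auto
  have ib: "idim b l b = 1" "idim a d b = 1" "idim b l (b - 1) = 0" "idim a d (b - 1) = 1"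
    using ab ad l1 unfolding idim_def j_def by auto
  have hb: "h b = 1\<^sub>m 1"
    using hu[of b] hc[of b] ib by (simp add: u_def rdim_U ones_11 ones_11')
  have "h (Suc (b - 1)) * rarr ?E (b - 1) = rarr ?M (b - 1) * h (b - 1)"
    using hh unfolding is_hom_def by blast
  hence "h b * ones 1 1 = ones 1 0 * h (b - 1)" using ab ib by (simp add: rarr_U)
  also have "\<dots> = 0\<^sub>m 1 1" using hc[of "b - 1"] ib by (intro zero_mid) auto
  finally have "(1\<^sub>m 1 :: 'k mat) = 0\<^sub>m 1 1" using hb by (simp add: ones_11 ones_11')
  thus False using ones_ne_zero[where 'k='k] by (simp add: ones_11 ones_11')
qed

lemma U_inj_iff:
  assumes K: "linear_kupisch n c" and bl: "b + l \<le> n" and l1: "1 \<le> l" and lc: "l \<le> c b"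
  shows "l \<le> dinj c (b + l - 1)"
    and "is_injective n c (uniserial_mod b l :: 'k::field rep) \<longleftrightarrow> l = dinj c (b + l - 1)"
proof -
  define j where "j = b + l - 1"
  have j: "j < n" using bl l1 unfolding j_def by auto
  note dc = dinj_char[OF K j]
  have bj: "b \<le> j" "j < b + c b" using lc l1 unfolding j_def by auto
  have "j + 1 - dinj c j \<le> b" using dc(3)[OF bj(1)] bj(2) by auto
  thus ld: "l \<le> dinj c (b + l - 1)" using l1 dc unfolding j_def by auto
  show "is_injective n c (uniserial_mod b l :: 'k::field rep) \<longleftrightarrow> l = dinj c (b + l - 1)"
  proof
    assume "is_injective n c (uniserial_mod b l :: 'k::field rep)"
    thus "l = dinj c (b + l - 1)" using U_not_inj[OF K bl l1 lc] ld by force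
  next
    assume e: "l = dinj c (b + l - 1)"
    have "b = j + 1 - dinj c j" using e l1 unfolding j_def by auto
    thus "is_injective n c (uniserial_mod b l :: 'k::field rep)"
      using E_inj[OF K j, where 'k='k] e unfolding j_def by simp
  qed
qed

definition zrep :: "'k::field rep" where "zrep = ((\<lambda>_. 0), (\<lambda>_. 0\<^sub>m 0 0))"

lemma zrep_simps[simp]: "rdim zrep m = 0" "rarr zrep m = 0\<^sub>m 0 0"
  unfolding zrep_def rdim_def rarr_def by auto

lemma zrep_inj: "is_injective n c (zrep :: 'k::field rep)"
  unfolding is_injective_def
proof (intro conjI allI impI)
  have cz: "carr (zrep :: 'k rep)" by (simp add: carr_def)
  show "is_rep n c (zrep :: 'k rep)" unfolding is_rep_def
  proof (intro conjI allI impI)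
    fix i
    have "rpath (zrep :: 'k rep) i (c i) \<in> carrier_mat 0 0" using rpath_carrier[OF cz, of i "c i"] by simp
    thus "rpath (zrep :: 'k rep) i (c i) = 0\<^sub>m (rdim zrep (i + c i)) (rdim zrep i)" by (simp add: zero_rows_eq)
  qed auto
  fix X Y :: "'k rep" and u g
  assume "is_rep n c X" and Y: "is_rep n c Y" and "is_hom X Y u" "is_mono X Y u" "is_hom X zrep g"
  hence gc: "\<And>m. g m \<in> carrier_mat 0 (rdim X m)" and uc: "\<And>m. u m \<in> carrier_mat (rdim Y m) (rdim X m)"
    unfolding is_hom_def by auto
  have "is_hom Y zrep (\<lambda>m. 0\<^sub>m 0 (rdim Y m))" unfolding is_hom_def
  proof (intro allI conjI)
    fix j
    have "rarr Y j \<in> carrier_mat (rdim Y (Suc j)) (rdim Y j)" using rep_carr[OF Y] by (simp add: carr_def)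
    hence "0\<^sub>m 0 (rdim Y (Suc j)) * rarr Y j \<in> carrier_mat 0 (rdim Y j)" by simp
    thus "0\<^sub>m 0 (rdim Y (Suc j)) * rarr Y j = rarr zrep j * 0\<^sub>m 0 (rdim Y j)"
      by (intro zero_rows_eq) auto
  qed auto
  moreover have "0\<^sub>m 0 (rdim Y m) * u m = g m" for m
    using gc[of m] uc[of m] by (intro zero_rows_eq) auto
  ultimately show "\<exists>h. is_hom Y zrep h \<and> (\<forall>j. h j * u j = g j)" by blast
qed

lemma retract_inj:
  assumes N: "is_rep n c N" and I: "is_injective n c I"
    and al: "is_hom N I al" and be: "is_hom I N be" and ba: "\<And>m. be m * al m = 1\<^sub>m (rdim N m)"
  shows "is_injective n c N"
  unfolding is_injective_def
proof (intro conjI allI impI N)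
  fix X Y u g
  assume X: "is_rep n c X" and Y: "is_rep n c Y" and hu: "is_hom X Y u" and mu: "is_mono X Y u"
    and hg: "is_hom X N g"
  have repI: "is_rep n c I" using I unfolding is_injective_def by auto
  have cI: "carr I" and cN: "carr N" and cX: "carr X" and cY: "carr Y"
    using repI N X Y by (auto intro: rep_carr)
  have "is_hom X I (\<lambda>m. al m * g m)" by (rule hom_comp[OF hg al cX cN cI])
  with I X Y hu mu obtain h' where h': "is_hom Y I h'" and hu': "\<And>m. h' m * u m = al m * g m"
    unfolding is_injective_def by blast
  have "is_hom Y N (\<lambda>m. be m * h' m)" by (rule hom_comp[OF h' be cY cI cN])
  moreover have "be m * h' m * u m = g m" for m
  proof -
    have c1: "h' m \<in> carrier_mat (rdim I m) (rdim Y m)" using h' unfolding is_hom_def by auto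
    have c2: "u m \<in> carrier_mat (rdim Y m) (rdim X m)" using hu unfolding is_hom_def by auto
    have c3: "be m \<in> carrier_mat (rdim N m) (rdim I m)" using be unfolding is_hom_def by auto
    have c4: "al m \<in> carrier_mat (rdim I m) (rdim N m)" using al unfolding is_hom_def by auto
    have c5: "g m \<in> carrier_mat (rdim N m) (rdim X m)" using hg unfolding is_hom_def by auto
    have "be m * h' m * u m = be m * (al m * g m)" using assoc_mult_mat[OF c3 c1 c2] hu' by simp
    also have "\<dots> = (be m * al m) * g m" using assoc_mult_mat[OF c3 c4 c5] by simp
    also have "\<dots> = g m" using ba c5 by simp
    finally show ?thesis .
  qed
  ultimately show "\<exists>h. is_hom Y N h \<and> (\<forall>j. h j * u j = g j)" by blast
qed

lemma ones_mv1: "v \<in> carrier_vec (Suc 0) \<Longrightarrow> ones (Suc 0) (Suc 0) *\<^sub>v v = (v :: 'k::field vec)"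
  by (simp add: ones_11')
lemma ones_mv0: "u \<in> carrier_vec 0 \<Longrightarrow> ones r 0 *\<^sub>v u = (0\<^sub>v r :: 'k::field vec)"
  by (rule eq_vecI) (auto simp: scalar_prod_def)
lemma mv_rows0: "A \<in> carrier_mat 0 c \<Longrightarrow> A *\<^sub>v v = (0\<^sub>v 0 :: 'k::field vec)"
  by (rule eq_vecI) auto

lemma incl_hom:
  assumes "a \<le> b" "b + l = a + d"
  shows "is_hom (uniserial_mod b l) (uniserial_mod a d) (\<lambda>m. ones (idim a d m) (idim b l m) :: 'k::field mat)"
  unfolding is_hom_def rdim_U rarr_U
  by (auto intro!: ones_sq_eq) (use assms in \<open>auto simp: idim_def split: if_splits\<close>)

lemma incl_mono:
  assumes "a \<le> b" "b + l = a + d"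
  shows "is_mono (uniserial_mod b l) (uniserial_mod a d) (\<lambda>m. ones (idim a d m) (idim b l m) :: 'k::field mat)"
  unfolding is_mono_def rdim_U
proof (intro allI ballI impI)
  fix m and v :: "'k vec" assume v: "v \<in> carrier_vec (idim b l m)"
    and z: "ones (idim a d m) (idim b l m) *\<^sub>v v = 0\<^sub>v (idim a d m)"
  show "v = 0\<^sub>v (idim b l m)"
  proof (cases "b \<le> m \<and> m < b + l")
    case True
    hence "idim a d m = 1" "idim b l m = 1" using assms unfolding idim_def by auto
    thus ?thesis using z v by (simp add: ones_11 ones_11')
  next
    case False
    hence "idim b l m = 0" unfolding idim_def by auto
    thus ?thesis using v vec0_eq by auto
  qed
qed

lemma quot_hom:
  assumes "l \<le> d"
  shows "is_hom (uniserial_mod a d) (uniserial_mod a l) (\<lambda>m. ones (idim a l m) (idim a d m) :: 'k::field mat)"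
  unfolding is_hom_def rdim_U rarr_U
  by (auto intro!: ones_sq_eq) (use assms in \<open>auto simp: idim_def split: if_splits\<close>)

lemma resolution:
  assumes K: "linear_kupisch n c" and i: "i < n" and k1: "1 \<le> k" and kc: "k \<le> c i"
    and kd: "k < dinj c (i + k - 1)" and e: "dinj c (i + k - 1) - k = dinj_pred c i"
  shows "injdim_le_one n c (uniserial_mod i k :: 'k::field rep)"
proof -
  define j where "j = i + k - 1"
  define d where "d = dinj c j"
  define a where "a = j + 1 - d"
  have ikn: "i + k \<le> n" using K i kc unfolding linear_kupisch_def by auto
  have j: "j < n" using ikn k1 unfolding j_def by auto
  note dc = dinj_char[OF K j, folded d_def, folded a_def]
  have ad: "a + d = j + 1" using dc unfolding a_def by auto
  have i0: "i \<noteq> 0" using e kd unfolding dinj_pred_def by (cases "i = 0") auto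
  have ai: "a < i" using kd ad k1 unfolding j_def d_def by auto
  have e2: "d - k = dinj c (i - 1)" using e i0 unfolding dinj_pred_def d_def j_def by auto
  have a2: "i - 1 + 1 - dinj c (i - 1) = a" using e2 ad ai k1 i0 unfolding j_def by auto
  let ?M = "uniserial_mod i k :: 'k rep"
  let ?E = "uniserial_mod a d :: 'k rep"
  let ?N = "uniserial_mod a (d - k) :: 'k rep"
  have injE: "is_injective n c ?E" using E_inj[OF K j, where 'k='k] unfolding a_def d_def .
  have injN: "is_injective n c ?N" using E_inj[OF K, of "i - 1", where 'k='k] i a2 e2 by simp
  define f where "f m = (ones (idim a d m) (idim i k m) :: 'k mat)" for m
  define g where "g m = (ones (idim a (d - k) m) (idim a d m) :: 'k mat)" for m
  have ia: "a \<le> i" "i + k = a + d" using ai ad k1 unfolding j_def by auto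
  have hf: "is_hom ?M ?E f" unfolding f_def by (rule incl_hom[OF ia])
  have mf: "is_mono ?M ?E f" unfolding f_def by (rule incl_mono[OF ia])
  have hg: "is_hom ?E ?N g" unfolding g_def by (rule quot_hom) auto
  have ex: "is_exact_at ?M ?E ?N f g" unfolding is_exact_at_def rdim_U
  proof (intro allI ballI)
    fix m and v :: "'k vec" assume v: "v \<in> carrier_vec (idim a d m)"
    show "(g m *\<^sub>v v = 0\<^sub>v (idim a (d - k) m)) = (\<exists>u\<in>carrier_vec (idim i k m). f m *\<^sub>v u = v)"
    proof (cases "a \<le> m \<and> m < a + d")
      case False
      hence z: "idim a d m = 0" "idim a (d - k) m = 0" "idim i k m = 0" using ia unfolding idim_def by auto
      have v0: "v = 0\<^sub>v 0" by (rule vec0_eq) (use v z in simp)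
      have "f m *\<^sub>v 0\<^sub>v 0 = 0\<^sub>v 0" unfolding f_def z by (rule ones_mv0) simp
      hence "f m *\<^sub>v 0\<^sub>v 0 = v" using v0 by simp
      moreover have "g m *\<^sub>v v = 0\<^sub>v 0" unfolding g_def z by (rule mv_rows0) auto
      ultimately show ?thesis using z by auto
    next
      case True
      show ?thesis
      proof (cases "m < i")
        case True
        hence z: "idim a d m = 1" "idim a (d - k) m = 1" "idim i k m = 0" using ia \<open>a \<le> m \<and> m < a + d\<close> unfolding idim_def by auto
        have "\<And>u. u \<in> carrier_vec 0 \<Longrightarrow> f m *\<^sub>v u = 0\<^sub>v 1" unfolding f_def z by (rule ones_mv0)
        moreover have "\<exists>u :: 'k vec. u \<in> carrier_vec 0" by (rule exI[of _ "0\<^sub>v 0"]) simp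
        ultimately show ?thesis using v unfolding g_def z by (auto simp: ones_11 ones_11')
      next
        case False
        hence z: "idim a d m = 1" "idim a (d - k) m = 0" "idim i k m = 1" using ia \<open>a \<le> m \<and> m < a + d\<close> unfolding idim_def by auto
        have "g m *\<^sub>v v = 0\<^sub>v 0" unfolding g_def z by (rule mv_rows0) auto
        moreover have "f m *\<^sub>v v = v" using v unfolding f_def z by (simp add: ones_11 ones_11')
        ultimately show ?thesis using v z by auto
      qed
    qed
  qed
  have ep: "is_epi ?E ?N g" unfolding is_epi_def rdim_U
  proof (intro allI ballI)
    fix m and w :: "'k vec" assume w: "w \<in> carrier_vec (idim a (d - k) m)"
    show "\<exists>v\<in>carrier_vec (idim a d m). g m *\<^sub>v v = w"
    proof (cases "a \<le> m \<and> m < a + (d - k)")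
      case True
      hence z: "idim a d m = 1" "idim a (d - k) m = 1" unfolding idim_def by auto
      show ?thesis using w unfolding g_def z by (intro bexI[of _ w]) (auto simp: ones_11 ones_11')
    next
      case False
      hence z: "idim a (d - k) m = 0" unfolding idim_def by auto
      have w0: "w = 0\<^sub>v 0" by (rule vec0_eq) (use w z in simp)
      have "g m *\<^sub>v 0\<^sub>v (idim a d m) = (0\<^sub>v 0 :: 'k vec)" unfolding g_def z by (rule mv_rows0[OF ones_carrier])
      hence "g m *\<^sub>v 0\<^sub>v (idim a d m) = w" using w0 by simp
      thus ?thesis by auto
    qed
  qed
  show ?thesis unfolding injdim_le_one_def using injE injN hf hg mf ex ep by blast
qed

lemma resolution0:
  assumes K: "linear_kupisch n c" and i: "i < n" and k1: "1 \<le> k" and kc: "k \<le> c i"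
    and kd: "is_injective n c (uniserial_mod i k :: 'k::field rep)"
  shows "injdim_le_one n c (uniserial_mod i k :: 'k::field rep)"
proof -
  let ?M = "uniserial_mod i k :: 'k rep"
  define g where "g m = (0\<^sub>m 0 (rdim ?M m) :: 'k mat)" for m
  have hf: "is_hom ?M ?M (\<lambda>m. 1\<^sub>m (rdim ?M m))" by (rule id_hom[OF U_carr])
  have hg: "is_hom ?M zrep g" unfolding is_hom_def g_def
  proof (intro allI conjI)
    fix j
    have "rarr ?M j \<in> carrier_mat (rdim ?M (Suc j)) (rdim ?M j)" using U_carr[where 'k='k] by (simp add: carr_def)
    hence "0\<^sub>m 0 (rdim ?M (Suc j)) * rarr ?M j \<in> carrier_mat 0 (rdim ?M j)" by simp
    thus "0\<^sub>m 0 (rdim ?M (Suc j)) * rarr ?M j = rarr zrep j * 0\<^sub>m 0 (rdim ?M j)"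
      by (intro zero_rows_eq) auto
  qed auto
  have mf: "is_mono ?M ?M (\<lambda>m. 1\<^sub>m (rdim ?M m))" unfolding is_mono_def by auto
  have ex: "is_exact_at ?M ?M zrep (\<lambda>m. 1\<^sub>m (rdim ?M m)) g" unfolding is_exact_at_def g_def
    by (auto intro: mv_rows0)
  have ep: "is_epi ?M zrep g" unfolding is_epi_def g_def
  proof (intro allI ballI)
    fix j and w :: "'k vec" assume "w \<in> carrier_vec (rdim zrep j)"
    hence w0: "w = 0\<^sub>v 0" by (intro vec0_eq) simp
    have "0\<^sub>m 0 (rdim ?M j) *\<^sub>v 0\<^sub>v (rdim ?M j) = (0\<^sub>v 0 :: 'k vec)" by (rule mv_rows0) auto
    hence "0\<^sub>m 0 (rdim ?M j) *\<^sub>v 0\<^sub>v (rdim ?M j) = w" using w0 by simp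
    thus "\<exists>v\<in>carrier_vec (rdim ?M j). 0\<^sub>m 0 (rdim ?M j) *\<^sub>v v = w" by (intro bexI[of _ "0\<^sub>v (rdim ?M j)"]) auto
  qed
  show ?thesis unfolding injdim_le_one_def using kd zrep_inj hf hg mf ex ep by blast
qed

lemma mv_cols0: "A \<in> carrier_mat r 0 \<Longrightarrow> u \<in> carrier_vec 0 \<Longrightarrow> A *\<^sub>v u = (0\<^sub>v r :: 'k::field vec)"
  by (rule eq_vecI) (auto simp: scalar_prod_def)

lemma zero_mat_mv: "v \<in> carrier_vec c \<Longrightarrow> 0\<^sub>m r c *\<^sub>v v = (0\<^sub>v r :: 'k::field vec)"
  by (rule eq_vecI) (auto simp: scalar_prod_def)

lemma injdim_imp:
  assumes K: "linear_kupisch n c" and i: "i < n" and k1: "1 \<le> k" and kc: "k \<le> c i"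
    and kd: "k < dinj c (i + k - 1)"
    and idl: "injdim_le_one n c (uniserial_mod i k :: 'k::field rep)"
  shows "dinj c (i + k - 1) - k = dinj_pred c i"
proof -
  define j where "j = i + k - 1"
  define d where "d = dinj c j"
  define a where "a = j + 1 - d"
  have ikn: "i + k \<le> n" using K i kc unfolding linear_kupisch_def by auto
  have j: "j < n" using ikn k1 unfolding j_def by auto
  note dc = dinj_char[OF K j, folded d_def, folded a_def]
  have ad: "a + d = j + 1" using dc unfolding a_def by auto
  have i0: "i \<noteq> 0" using dc(2) kd k1 unfolding j_def d_def by auto
  have ai: "a < i" using kd ad k1 unfolding j_def d_def by auto
  have ia: "a \<le> i" "i + k = a + d" using ai ad k1 unfolding j_def by auto
  have aj: "a \<le> j" using ai k1 unfolding j_def by auto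
  have ac: "d \<le> c a" using dc(3)[OF aj] ad by auto
  have aN: "a + (d - k) = i" using ia kd unfolding d_def j_def by auto
  let ?M = "uniserial_mod i k :: 'k rep"
  let ?E = "uniserial_mod a d :: 'k rep"
  let ?N = "uniserial_mod a (d - k) :: 'k rep"
  have repM: "is_rep n c ?M" by (rule U_rep[OF K ikn i kc])
  have repE: "is_rep n c ?E" by (rule U_rep[OF K]) (use ad j aj ac in auto)
  have repN: "is_rep n c ?N" by (rule U_rep[OF K]) (use ad j aj ac aN in auto)
  have injE: "is_injective n c ?E" using E_inj[OF K j, where 'k='k] unfolding a_def d_def .
  from idl obtain I0 I1 :: "'k rep" and f g where I0: "is_injective n c I0" and I1: "is_injective n c I1"
    and hf: "is_hom ?M I0 f" and hg: "is_hom I0 I1 g" and mf: "is_mono ?M I0 f"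
    and ex: "is_exact_at ?M I0 I1 f g" and ep: "is_epi I0 I1 g"
    unfolding injdim_le_one_def by blast
  have repI0: "is_rep n c I0" and repI1: "is_rep n c I1" using I0 I1 unfolding is_injective_def by auto
  have cI0: "carr I0" and cI1: "carr I1" using repI0 repI1 by (auto intro: rep_carr)
  have cE: "carr ?E" and cN: "carr ?N" and cM: "carr ?M" by (rule U_carr)+
  have idE: "\<And>m. idim a d m = (if a \<le> m \<and> m \<le> j then 1 else 0)" unfolding idim_def using ad by auto
  have idN: "\<And>m. idim a (d - k) m = (if a \<le> m \<and> m < i then 1 else 0)" unfolding idim_def using aN by auto
  have idM: "\<And>m. idim i k m = (if i \<le> m \<and> m \<le> j then 1 else 0)" unfolding idim_def j_def using k1 by auto
  define io where "io m = (ones (idim a d m) (idim i k m) :: 'k mat)" for m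
  have hio: "is_hom ?M ?E io" unfolding io_def by (rule incl_hom[OF ia])
  have mio: "is_mono ?M ?E io" unfolding io_def by (rule incl_mono[OF ia])
  from I0[unfolded is_injective_def] repM repE hio mio hf
  obtain ph where hph: "is_hom ?E I0 ph" and phio: "\<And>m. ph m * io m = f m" by blast
  from injE[unfolded is_injective_def] repM repI0 hf mf hio
  obtain ps where hps: "is_hom I0 ?E ps" and psf: "\<And>m. ps m * f m = io m" by blast
  have fc: "\<And>m. f m \<in> carrier_mat (rdim I0 m) (idim i k m)" using hf unfolding is_hom_def rdim_U by auto
  have gc: "\<And>m. g m \<in> carrier_mat (rdim I1 m) (rdim I0 m)" using hg unfolding is_hom_def by auto
  have phc: "\<And>m. ph m \<in> carrier_mat (rdim I0 m) (idim a d m)" using hph unfolding is_hom_def rdim_U by auto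
  have psc: "\<And>m. ps m \<in> carrier_mat (idim a d m) (rdim I0 m)" using hps unfolding is_hom_def rdim_U by auto
  have ioc: "\<And>m. io m \<in> carrier_mat (idim a d m) (idim i k m)" unfolding io_def by simp
  have gcomm: "\<And>m. g (Suc m) * rarr I0 m = rarr I1 m * g m" using hg unfolding is_hom_def by auto
  have phcomm: "\<And>m. ph (Suc m) * rarr ?E m = rarr I0 m * ph m" using hph unfolding is_hom_def by auto
  have pscomm: "\<And>m. ps (Suc m) * rarr I0 m = rarr ?E m * ps m" using hps unfolding is_hom_def by auto
  have cI0a: "\<And>m. rarr I0 m \<in> carrier_mat (rdim I0 (Suc m)) (rdim I0 m)" using cI0 unfolding carr_def by auto
  have cI1a: "\<And>m. rarr I1 m \<in> carrier_mat (rdim I1 (Suc m)) (rdim I1 m)" using cI1 unfolding carr_def by auto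
  define rho where "rho m = ps m * ph m" for m
  have hrho: "is_hom ?E ?E rho" unfolding rho_def by (rule hom_comp[OF hph hps cE cI0 cE])
  have rhoc: "\<And>m. rho m \<in> carrier_mat (idim a d m) (idim a d m)" unfolding rho_def using psc phc by (metis mult_carrier_mat)
  have rhoj: "rho j = 1\<^sub>m 1"
  proof -
    have e1: "idim a d j = 1" "idim i k j = 1" using aj ia k1 unfolding idE idM j_def by auto
    have "rho j * io j = ps j * (ph j * io j)" unfolding rho_def by (rule assoc_mult_mat[OF psc phc ioc])
    also have "\<dots> = io j" by (simp add: phio psf)
    finally have "rho j * io j = io j" .
    moreover have "io j = 1\<^sub>m 1" unfolding io_def e1 by (rule ones_11 ones_11')
    ultimately show ?thesis using rhoc[of j] e1 by simp
  qed
  have rho1: "rho m = 1\<^sub>m 1" if m: "a \<le> m" "m \<le> j" for m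
  proof -
    have e1: "idim a d j = 1" "idim a d m = 1" using m unfolding idE by auto
    have "rho (m + (j - m)) * rpath ?E m (j - m) = rpath ?E m (j - m) * rho m"
      by (rule hom_path[OF cE cE hrho])
    moreover have "rpath ?E m (j - m) = 1\<^sub>m 1" using m e1 by (simp add: rpath_U ones_11 ones_11')
    ultimately have "rho j = rho m" using m rhoc[of m] rhoc[of j] e1 by simp
    thus ?thesis using rhoj by simp
  qed
  have gf0: "g i * f i = 0\<^sub>m (rdim I1 i) 1"
  proof -
    have e1: "idim i k i = 1" using k1 unfolding idim_def by auto
    have c1: "g i * f i \<in> carrier_mat (rdim I1 i) 1" using gc[of i] fc[of i] e1 by auto
    show ?thesis
    proof (rule mat_eq_by_vec[OF c1])
      fix v :: "'k vec" assume v: "v \<in> carrier_vec 1"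
      have fv: "f i *\<^sub>v v \<in> carrier_vec (rdim I0 i)" using fc[of i] v e1 by auto
      have exi: "\<And>w. w \<in> carrier_vec (rdim I0 i) \<Longrightarrow> (g i *\<^sub>v w = 0\<^sub>v (rdim I1 i)) = (\<exists>u\<in>carrier_vec (idim i k i). f i *\<^sub>v u = w)"
        using ex unfolding is_exact_at_def rdim_U by blast
      have "\<exists>u\<in>carrier_vec (idim i k i). f i *\<^sub>v u = f i *\<^sub>v v" using v e1 by auto
      hence "g i *\<^sub>v (f i *\<^sub>v v) = 0\<^sub>v (rdim I1 i)" using exi[OF fv] by simp
      thus "(g i * f i) *\<^sub>v v = 0\<^sub>m (rdim I1 i) 1 *\<^sub>v v"
        using gc[of i] fc[of i] e1 v by (simp add: assoc_mult_mat_vec zero_mat_mv)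
    qed auto
  qed
  have ginj: "\<And>v. v \<in> carrier_vec (rdim I0 m) \<Longrightarrow> g m *\<^sub>v v = 0\<^sub>v (rdim I1 m) \<Longrightarrow> v = 0\<^sub>v (rdim I0 m)"
    if m: "a \<le> m" "m < i" for m
  proof -
    fix v :: "'k vec" assume v: "v \<in> carrier_vec (rdim I0 m)" and z: "g m *\<^sub>v v = 0\<^sub>v (rdim I1 m)"
    have e0: "idim i k m = 0" using m unfolding idM by auto
    have exi: "\<And>w. w \<in> carrier_vec (rdim I0 m) \<Longrightarrow> (g m *\<^sub>v w = 0\<^sub>v (rdim I1 m)) = (\<exists>u\<in>carrier_vec (idim i k m). f m *\<^sub>v u = w)"
      using ex unfolding is_exact_at_def rdim_U by blast
    from exi[OF v] z obtain u where u: "u \<in> carrier_vec (idim i k m)" and fu: "f m *\<^sub>v u = v" by blast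
    have "f m *\<^sub>v u = 0\<^sub>v (rdim I0 m)" using fc[of m] u unfolding e0 by (intro mv_cols0) auto
    thus "v = 0\<^sub>v (rdim I0 m)" using fu by simp
  qed
  define L where "L m = (SOME L. L \<in> carrier_mat (rdim I0 m) (rdim I1 m) \<and> L * g m = 1\<^sub>m (rdim I0 m))" for m
  have Lp: "L m \<in> carrier_mat (rdim I0 m) (rdim I1 m) \<and> L m * g m = 1\<^sub>m (rdim I0 m)" if m: "a \<le> m" "m < i" for m
  proof -
    from left_inverse_exists[OF gc[of m] ginj[OF m]]
    have "\<exists>L. L \<in> carrier_mat (rdim I0 m) (rdim I1 m) \<and> L * g m = 1\<^sub>m (rdim I0 m)" by blast
    thus ?thesis unfolding L_def by (rule someI_ex)
  qed
  define s where "s m = (ones (idim a d m) (idim a (d - k) m) :: 'k mat)" for m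
  define al where "al m = g m * (ph m * s m)" for m
  define be where "be m = (if a \<le> m \<and> m < i then ps m * L m else 0\<^sub>m 0 (rdim I1 m))" for m
  have sc: "\<And>m. s m \<in> carrier_mat (idim a d m) (idim a (d - k) m)" unfolding s_def by simp
  have alc: "\<And>m. al m \<in> carrier_mat (rdim I1 m) (idim a (d - k) m)" unfolding al_def
    using gc phc sc by (metis mult_carrier_mat)
  have bec: "be m \<in> carrier_mat (idim a (d - k) m) (rdim I1 m)" for m
  proof (cases "a \<le> m \<and> m < i")
    case True
    thus ?thesis unfolding be_def using psc[of m] Lp[of m] idN idE j_def by (auto simp: idN idE j_def)
  qed (auto simp: be_def idN)
  have beg: "be m * g m = ps m" if m: "a \<le> m" "m < i" for m
  proof -
    have "be m * g m = ps m * (L m * g m)" unfolding be_def using m Lp[OF m] psc[of m] gc[of m]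
      by (simp add: assoc_mult_mat[of _ "idim a d m" "rdim I0 m" _ "rdim I1 m" _ "rdim I0 m"])
    thus ?thesis using Lp[OF m] psc[of m] by simp
  qed
  have s1: "s m = 1\<^sub>m 1" if "a \<le> m" "m < i" for m
  proof -
    have "idim a d m = 1" "idim a (d - k) m = 1" using that k1 unfolding idE idN j_def by auto
    thus ?thesis unfolding s_def by (simp add: ones_11 ones_11')
  qed
  have hal: "is_hom ?N I1 al" unfolding is_hom_def
  proof (intro allI conjI)
    fix m
    show "al m \<in> carrier_mat (rdim I1 m) (rdim ?N m)" using alc by (simp add: rdim_U)
    show "al (Suc m) * rarr ?N m = rarr I1 m * al m"
    proof (cases "a \<le> m \<and> m < i")
      case False
      hence z: "idim a (d - k) m = 0" unfolding idN by auto
      have c1: "al (Suc m) * rarr ?N m \<in> carrier_mat (rdim I1 (Suc m)) 0"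
        using alc[of "Suc m"] z by (simp add: rarr_U)
      have c2: "rarr I1 m * al m \<in> carrier_mat (rdim I1 (Suc m)) 0"
        using alc[of m] cI1a[of m] z by (metis mult_carrier_mat)
      show ?thesis by (rule zero_cols_eq[OF c1 c2])
    next
      case True
      have e: "idim a d m = 1" "idim a (d - k) m = 1" using True unfolding idE idN j_def by auto
      have phs: "ph m * s m = ph m" using s1[of m] True phc[of m] e by simp
      have "rarr I1 m * al m = (rarr I1 m * g m) * ph m" unfolding al_def phs
        using cI1a[of m] gc[of m] phc[of m] by (simp add: assoc_mult_mat[of _ "rdim I1 (Suc m)" "rdim I1 m" _ "rdim I0 m" _ "idim a d m"])
      also have "\<dots> = g (Suc m) * (rarr I0 m * ph m)" unfolding gcomm[symmetric]
        using cI0a[of m] gc[of "Suc m"] phc[of m] by (simp add: assoc_mult_mat[of _ "rdim I1 (Suc m)" "rdim I0 (Suc m)" _ "rdim I0 m" _ "idim a d m"])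
      also have "\<dots> = g (Suc m) * (ph (Suc m) * rarr ?E m)" unfolding phcomm ..
      also have "rarr ?E m = ones (idim a d (Suc m)) 1" using e by (simp add: rarr_U)
      finally have R: "rarr I1 m * al m = g (Suc m) * (ph (Suc m) * ones (idim a d (Suc m)) 1)" .
      show ?thesis
      proof (cases "Suc m < i")
        case True
        have e2: "idim a d (Suc m) = 1" "idim a (d - k) (Suc m) = 1" using True \<open>a \<le> m \<and> m < i\<close> unfolding idE idN j_def by auto
        have "al (Suc m) * rarr ?N m = al (Suc m)" using e e2 alc[of "Suc m"] by (simp add: rarr_U ones_11 ones_11')
        also have "\<dots> = g (Suc m) * ph (Suc m)" unfolding al_def using s1[of "Suc m"] True \<open>a \<le> m \<and> m < i\<close> phc[of "Suc m"] e2 by simp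
        also have "\<dots> = rarr I1 m * al m" unfolding R using e2 phc[of "Suc m"] by (simp add: ones_11 ones_11')
        finally show ?thesis .
      next
        case False
        hence mi: "Suc m = i" using True by auto
        have e2: "idim a d i = 1" "idim a (d - k) i = 0" "idim i k i = 1" using ia k1 unfolding idE idN idM j_def by auto
        have "al (Suc m) * rarr ?N m = 0\<^sub>m (rdim I1 i) 1" unfolding mi rarr_U using e e2 alc[of i] mi
          by (intro zero_mid) auto
        also have "\<dots> = g i * f i" by (rule gf0[symmetric])
        also have "\<dots> = rarr I1 m * al m" unfolding R mi phio[symmetric] io_def e2 ..
        finally show ?thesis .
      qed
    qed
  qed
  have hbe: "is_hom I1 ?N be" unfolding is_hom_def
  proof (intro allI conjI)
    fix m
    show "be m \<in> carrier_mat (rdim ?N m) (rdim I1 m)" using bec by (simp add: rdim_U)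
    have c1: "be (Suc m) * rarr I1 m \<in> carrier_mat (idim a (d - k) (Suc m)) (rdim I1 m)"
      using bec[of "Suc m"] cI1a[of m] by (metis mult_carrier_mat)
    have c2: "rarr ?N m * be m \<in> carrier_mat (idim a (d - k) (Suc m)) (rdim I1 m)"
      unfolding rarr_U by (rule mult_carrier_mat[OF ones_carrier bec])
    show "be (Suc m) * rarr I1 m = rarr ?N m * be m"
    proof (cases "a \<le> Suc m \<and> Suc m < i")
      case False
      hence z: "idim a (d - k) (Suc m) = 0" unfolding idN by auto
      show ?thesis by (rule zero_rows_eq[OF c1[unfolded z] c2[unfolded z]])
    next
      case True
      have surj: "\<And>w. w \<in> carrier_vec (rdim I1 m) \<Longrightarrow> \<exists>v\<in>carrier_vec (rdim I0 m). g m *\<^sub>v v = w"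
        using ep unfolding is_epi_def by blast
      show ?thesis
      proof (rule right_cancel[OF c1 c2 gc surj])
        have "be (Suc m) * rarr I1 m * g m = be (Suc m) * (g (Suc m) * rarr I0 m)"
          unfolding gcomm using bec[of "Suc m"] cI1a[of m] gc[of m] by (rule assoc_mult_mat)
        also have "\<dots> = (be (Suc m) * g (Suc m)) * rarr I0 m"
          using bec[of "Suc m"] gc[of "Suc m"] cI0a[of m] by (rule assoc_mult_mat[symmetric])
        also have "\<dots> = rarr ?E m * ps m" using beg[of "Suc m"] True pscomm by auto
        finally have L1: "be (Suc m) * rarr I1 m * g m = rarr ?E m * ps m" .
        have L2: "rarr ?N m * be m * g m = rarr ?N m * (be m * g m)"
          using bec[of m] gc[of m] by (intro assoc_mult_mat[of _ "idim a (d - k) (Suc m)" "idim a (d - k) m"]) (auto simp: rarr_U)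
        show "be (Suc m) * rarr I1 m * g m = rarr ?N m * be m * g m"
        proof (cases "a \<le> m")
          case True
          have e: "idim a d m = 1" "idim a (d - k) m = 1" "idim a d (Suc m) = 1" "idim a (d - k) (Suc m) = 1"
            using True \<open>a \<le> Suc m \<and> Suc m < i\<close> unfolding idE idN j_def by auto
          have "rarr ?N m = rarr ?E m" using e by (simp add: rarr_U)
          thus ?thesis unfolding L1 L2 using beg[of m] True \<open>a \<le> Suc m \<and> Suc m < i\<close> by simp
        next
          case False
          have e: "idim a d m = 0" "idim a (d - k) m = 0" using False unfolding idE idN by auto
          have "rarr ?E m * ps m = 0\<^sub>m (idim a d (Suc m)) (rdim I0 m)"
            using psc[of m] e by (intro zero_mid) (auto simp: rarr_U)
          moreover have "rarr ?N m * (be m * g m) = 0\<^sub>m (idim a (d - k) (Suc m)) (rdim I0 m)"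
            using bec[of m] gc[of m] e by (intro zero_mid) (auto simp: rarr_U)
          moreover have "idim a d (Suc m) = idim a (d - k) (Suc m)"
            using \<open>a \<le> Suc m \<and> Suc m < i\<close> unfolding idE idN j_def by auto
          ultimately show ?thesis unfolding L1 L2 by simp
        qed
      qed
    qed
  qed
  have ba: "be m * al m = 1\<^sub>m (rdim ?N m)" for m
  proof (cases "a \<le> m \<and> m < i")
    case True
    have e: "idim a d m = 1" "idim a (d - k) m = 1" using True unfolding idE idN j_def by auto
    have "be m * al m = (be m * g m) * (ph m * s m)" unfolding al_def
      using bec[of m] gc[of m] phc[of m] sc[of m] by (intro assoc_mult_mat[symmetric]) auto
    also have "\<dots> = ps m * ph m" using beg[of m] s1[of m] True phc[of m] e by simp
    also have "\<dots> = 1\<^sub>m 1" using rho1[of m] True unfolding rho_def j_def by auto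
    finally show ?thesis using e by (simp add: rdim_U)
  next
    case False
    hence e: "idim a (d - k) m = 0" unfolding idN by auto
    have "be m * al m \<in> carrier_mat 0 0" using bec[of m] alc[of m] e by (metis mult_carrier_mat)
    thus ?thesis using e by (intro zero_rows_eq) (auto simp: rdim_U)
  qed
  have injN: "is_injective n c ?N" by (rule retract_inj[OF repN I1 hal hbe ba])
  have dN: "d - k \<le> c a" using ac by auto
  have "d - k = dinj c (a + (d - k) - 1)"
    using U_inj_iff(2)[OF K _ _ dN, where 'k='k] injN aN i ai by auto
  thus ?thesis using aN i0 unfolding dinj_pred_def d_def j_def by auto
qed

theorem mainTheorem5:
  fixes n :: nat and c :: "nat \<Rightarrow> nat" and i k :: nat
  assumes "linear_kupisch n c"
    and "i < n" and "1 \<le> k" and "k \<le> c i"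
  shows "(injdim_le_one n c (uniserial_mod i k :: 'k::field rep) \<longleftrightarrow>
            (k = dinj c (i + k - 1) \<or>
             (k < dinj c (i + k - 1) \<and> dinj c (i + k - 1) - k = dinj_pred c i)))
       \<and> (k = dinj c (i + k - 1) \<longleftrightarrow> is_injective n c (uniserial_mod i k :: 'k rep))"
proof -
  have ikn: "i + k \<le> n" using assms(1,2,4) unfolding linear_kupisch_def by auto
  note UI1 = U_inj_iff(1)[OF assms(1) ikn assms(3) assms(4)]
  note UI2 = U_inj_iff(2)[OF assms(1) ikn assms(3) assms(4), where 'k='k]
  have P2: "k = dinj c (i + k - 1) \<longleftrightarrow> is_injective n c (uniserial_mod i k :: 'k rep)" using UI2 by simp
  have P1: "injdim_le_one n c (uniserial_mod i k :: 'k rep) \<longleftrightarrow>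
            (k = dinj c (i + k - 1) \<or>
             (k < dinj c (i + k - 1) \<and> dinj c (i + k - 1) - k = dinj_pred c i))"
  proof
    assume h: "injdim_le_one n c (uniserial_mod i k :: 'k rep)"
    show "k = dinj c (i + k - 1) \<or> (k < dinj c (i + k - 1) \<and> dinj c (i + k - 1) - k = dinj_pred c i)"
    proof (cases "k = dinj c (i + k - 1)")
      case True thus ?thesis by simp
    next
      case False
      with UI1 have lt: "k < dinj c (i + k - 1)" by simp
      from injdim_imp[OF assms(1-4) lt h] lt show ?thesis by simp
    qed
  next
    assume "k = dinj c (i + k - 1) \<or> (k < dinj c (i + k - 1) \<and> dinj c (i + k - 1) - k = dinj_pred c i)"
    thus "injdim_le_one n c (uniserial_mod i k :: 'k rep)"
    proof
      assume "k = dinj c (i + k - 1)"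
      thus ?thesis using resolution0[OF assms(1-4)] P2 by simp
    next
      assume "k < dinj c (i + k - 1) \<and> dinj c (i + k - 1) - k = dinj_pred c i"
      thus ?thesis using resolution[OF assms(1-4)] by blast
    qed
  qed
  show ?thesis using P1 P2 by blast
qed

end
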